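(* Let $\Gamma$ be a Deza graph with parameters $(n,k,k-1,a)$, $k>1$, $\beta=1$. For any $NA$-vertex $x$, the vertex $x'$ is an $NA$-vertex.
   Context: A Deza graph with parameters $(n,k,b,a)$, $a\le b$, is a $k$-regular graph on $n$ vertices in which any two distinct vertices have $a$ or $b$ common neighbours; $\beta$ is the number of vertices $u\ne v$ with exactly $b$ common neighbours with a given vertex $v$. Since $\beta=1$, for each vertex $x$ let $x_b$ denote the unique vertex having $b=k-1$ common neighbours with $x$. A vertex $x$ is an $A$-vertex if $x$ is adjacent to $x_b$, and an $NA$-vertex otherwise. For an $NA$-vertex $x$, $x'$ denotes the unique neighbour of $x$ not adjacent to $x_b$. *)

theory Defs
  imports Main
begin

definition nbrs :: "'a set \<Rightarrow> ('a \<Rightarrow> 'a \<Rightarrow> bool) \<Rightarrow> 'a \<Rightarrow> 'a set" where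
  "nbrs V E x = {y \<in> V. E x y}"

definition common_nbrs :: "'a set \<Rightarrow> ('a \<Rightarrow> 'a \<Rightarrow> bool) \<Rightarrow> 'a \<Rightarrow> 'a \<Rightarrow> 'a set" where
  "common_nbrs V E x y = {z \<in> V. E x z \<and> E y z}"

definition simple_graph :: "'a set \<Rightarrow> ('a \<Rightarrow> 'a \<Rightarrow> bool) \<Rightarrow> bool" where
  "simple_graph V E \<longleftrightarrow> finite V \<and> (\<forall>x y. E x y \<longrightarrow> x \<in> V \<and> y \<in> V)
     \<and> (\<forall>x y. E x y \<longrightarrow> E y x) \<and> (\<forall>x. \<not> E x x)"

definition deza_graph :: "'a set \<Rightarrow> ('a \<Rightarrow> 'a \<Rightarrow> bool) \<Rightarrow> nat \<Rightarrow> nat \<Rightarrow> nat \<Rightarrow> nat \<Rightarrow> bool" where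
  "deza_graph V E n k b a \<longleftrightarrow> simple_graph V E \<and> card V = n \<and> a \<le> b
     \<and> (\<forall>x\<in>V. card (nbrs V E x) = k)
     \<and> (\<forall>x\<in>V. \<forall>y\<in>V. x \<noteq> y \<longrightarrow>
           card (common_nbrs V E x y) = a \<or> card (common_nbrs V E x y) = b)"

definition deza_beta :: "'a set \<Rightarrow> ('a \<Rightarrow> 'a \<Rightarrow> bool) \<Rightarrow> nat \<Rightarrow> 'a \<Rightarrow> nat" where
  "deza_beta V E b v = card {u \<in> V. u \<noteq> v \<and> card (common_nbrs V E u v) = b}"

definition b_vertex :: "'a set \<Rightarrow> ('a \<Rightarrow> 'a \<Rightarrow> bool) \<Rightarrow> nat \<Rightarrow> 'a \<Rightarrow> 'a" where
  "b_vertex V E b x = (THE u. u \<in> V \<and> u \<noteq> x \<and> card (common_nbrs V E x u) = b)"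

definition A_vertex :: "'a set \<Rightarrow> ('a \<Rightarrow> 'a \<Rightarrow> bool) \<Rightarrow> nat \<Rightarrow> 'a \<Rightarrow> bool" where
  "A_vertex V E b x \<longleftrightarrow> x \<in> V \<and> E x (b_vertex V E b x)"

definition NA_vertex :: "'a set \<Rightarrow> ('a \<Rightarrow> 'a \<Rightarrow> bool) \<Rightarrow> nat \<Rightarrow> 'a \<Rightarrow> bool" where
  "NA_vertex V E b x \<longleftrightarrow> x \<in> V \<and> \<not> E x (b_vertex V E b x)"

definition prime_vertex :: "'a set \<Rightarrow> ('a \<Rightarrow> 'a \<Rightarrow> bool) \<Rightarrow> nat \<Rightarrow> 'a \<Rightarrow> 'a" where
  "prime_vertex V E b x = (THE y. y \<in> V \<and> E x y \<and> \<not> E y (b_vertex V E b x))"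

end

theory Submission
  imports Defs
begin

lemma common_sym: "common_nbrs V E x y = common_nbrs V E y x"
  unfolding common_nbrs_def by auto

lemma nbr_sub:
  assumes sg: "simple_graph V E" and deg: "\<forall>w\<in>V. card (nbrs V E w) = k"
    and uv: "u \<in> V" "v \<in> V" "E u v" and c: "card (common_nbrs V E u v) = k - 1"
    and k: "k > 0"
  shows "nbrs V E v \<subseteq> insert u (nbrs V E u)"
proof -
  have fin: "finite V" "\<forall>x y. E x y \<longrightarrow> E y x" "\<forall>x. \<not> E x x"
    using sg unfolding simple_graph_def by auto
  have s1: "insert u (common_nbrs V E u v) \<subseteq> nbrs V E v"
    using uv fin unfolding common_nbrs_def nbrs_def by auto
  have nu: "u \<notin> common_nbrs V E u v" using fin unfolding common_nbrs_def by auto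
  have fc: "finite (common_nbrs V E u v)" using fin unfolding common_nbrs_def by auto
  have fn: "finite (nbrs V E v)" using fin unfolding nbrs_def by auto
  have "card (insert u (common_nbrs V E u v)) = k" using nu fc c k by simp
  moreover have "card (nbrs V E v) = k" using deg uv by auto
  ultimately have "insert u (common_nbrs V E u v) = nbrs V E v"
    using card_subset_eq[OF fn s1] by simp
  then show ?thesis unfolding common_nbrs_def nbrs_def by auto
qed

lemma bv:
  assumes d: "deza_graph V E n k (k - 1) a"
    and beta: "\<forall>v\<in>V. deza_beta V E (k - 1) v = 1" and x: "x \<in> V"
  shows "b_vertex V E (k - 1) x \<in> V \<and> b_vertex V E (k - 1) x \<noteq> x
     \<and> card (common_nbrs V E x (b_vertex V E (k - 1) x)) = k - 1
     \<and> (\<forall>u\<in>V. u \<noteq> x \<and> card (common_nbrs V E x u) = k - 1 \<longrightarrow> u = b_vertex V E (k - 1) x)"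
proof -
  have "card {u \<in> V. u \<noteq> x \<and> card (common_nbrs V E u x) = k - 1} = 1"
    using beta x unfolding deza_beta_def by auto
  then obtain u0 where u0: "{u \<in> V. u \<noteq> x \<and> card (common_nbrs V E u x) = k - 1} = {u0}"
    by (rule card_1_singletonE)
  have P: "\<And>u. (u \<in> V \<and> u \<noteq> x \<and> card (common_nbrs V E x u) = k - 1) \<longleftrightarrow> u = u0"
  proof -
    fix u
    have "u \<in> {u \<in> V. u \<noteq> x \<and> card (common_nbrs V E u x) = k - 1} \<longleftrightarrow> u = u0"
      using u0 by simp
    then show "?thesis u" using common_sym[of V E x u] by simp
  qed
  have "b_vertex V E (k - 1) x = u0"
    unfolding b_vertex_def using P by blast
  then show ?thesis using P by blast
qed

lemma pv:
  assumes d: "deza_graph V E n k (k - 1) a" and k: "k > 1"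
    and beta: "\<forall>v\<in>V. deza_beta V E (k - 1) v = 1" and x: "x \<in> V"
    and ne: "\<not> E x (b_vertex V E (k - 1) x)"
  shows "prime_vertex V E (k - 1) x \<in> V \<and> E x (prime_vertex V E (k - 1) x)
     \<and> \<not> E (prime_vertex V E (k - 1) x) (b_vertex V E (k - 1) x)
     \<and> (\<forall>w\<in>V. E x w \<and> w \<noteq> prime_vertex V E (k - 1) x \<longrightarrow> E w (b_vertex V E (k - 1) x))"
proof -
  define y where "y = b_vertex V E (k - 1) x"
  have sg: "simple_graph V E" and deg: "\<forall>w\<in>V. card (nbrs V E w) = k"
    using d unfolding deza_graph_def by auto
  have fin: "finite V" "\<forall>x y. E x y \<longrightarrow> E y x" "\<forall>x. \<not> E x x"
    using sg unfolding simple_graph_def by auto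
  have cy: "card (common_nbrs V E x y) = k - 1" using bv[OF d beta x] y_def by auto
  have sub: "common_nbrs V E x y \<subseteq> nbrs V E x" unfolding common_nbrs_def nbrs_def by auto
  have fn: "finite (nbrs V E x)" using fin unfolding nbrs_def by auto
  have "card (nbrs V E x - common_nbrs V E x y) = 1"
    using card_Diff_subset[OF finite_subset[OF sub fn] sub] cy deg x k by simp
  then obtain w0 where w0: "nbrs V E x - common_nbrs V E x y = {w0}"
    by (rule card_1_singletonE)
  have P: "\<And>w. (w \<in> V \<and> E x w \<and> \<not> E w y) \<longleftrightarrow> w = w0"
  proof -
    fix w
    have "(w \<in> V \<and> E x w \<and> \<not> E w y) \<longleftrightarrow> w \<in> nbrs V E x - common_nbrs V E x y"
      using fin unfolding nbrs_def common_nbrs_def by blast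
    then show "(w \<in> V \<and> E x w \<and> \<not> E w y) \<longleftrightarrow> w = w0" using w0 by simp
  qed
  have "prime_vertex V E (k - 1) x = w0"
    unfolding prime_vertex_def y_def[symmetric] using P by blast
  then show ?thesis using P y_def by blast
qed

theorem lemma9:
  fixes V :: "'a set" and E :: "'a \<Rightarrow> 'a \<Rightarrow> bool" and n k a :: nat and x :: 'a
  assumes "deza_graph V E n k (k - 1) a"
    and "k > 1"
    and "\<forall>v\<in>V. deza_beta V E (k - 1) v = 1"
    and "NA_vertex V E (k - 1) x"
  shows "NA_vertex V E (k - 1) (prime_vertex V E (k - 1) x)"
proof -
  note d = assms(1) and k = assms(2) and beta = assms(3)
  have x: "x \<in> V" and ne: "\<not> E x (b_vertex V E (k - 1) x)"
    using assms(4) unfolding NA_vertex_def by auto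
  define y where "y = b_vertex V E (k - 1) x"
  define x' where "x' = prime_vertex V E (k - 1) x"
  have sg: "simple_graph V E" and deg: "\<forall>w\<in>V. card (nbrs V E w) = k"
    using d unfolding deza_graph_def by auto
  have fin: "\<forall>x y. E x y \<longrightarrow> E y x" "\<forall>x. \<not> E x x"
    using sg unfolding simple_graph_def by auto
  have X: "x' \<in> V" "E x x'" "\<not> E x' y" "\<forall>w\<in>V. E x w \<and> w \<noteq> x' \<longrightarrow> E w y"
    using pv[OF d k beta x ne] x'_def y_def by auto
  have Y: "\<forall>u\<in>V. u \<noteq> x \<and> card (common_nbrs V E x u) = k - 1 \<longrightarrow> u = y"
    using bv[OF d beta x] y_def by auto
  define z where "z = b_vertex V E (k - 1) x'"
  have Z: "z \<in> V" "z \<noteq> x'" "card (common_nbrs V E x' z) = k - 1"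
    using bv[OF d beta X(1)] z_def by auto
  have "\<not> E x' z"
  proof
    assume ez: "E x' z"
    have s1: "nbrs V E z \<subseteq> insert x' (nbrs V E x')"
      using nbr_sub[OF sg deg X(1) Z(1) ez Z(3)] k by simp
    have s2: "nbrs V E x' \<subseteq> insert z (nbrs V E z)"
      using nbr_sub[OF sg deg Z(1) X(1) _ _] ez fin Z(3) common_sym[of V E x' z] k by simp
    have xz: "x \<noteq> z"
    proof
      assume "x = z"
      then have "card (common_nbrs V E x x') = k - 1" using Z common_sym[of V E] by metis
      moreover have "x' \<noteq> x" using X(2) fin by auto
      ultimately have "x' = y" using Y X(1) by simp
      then show False using X ne y_def by simp
    qed
    have "x \<in> nbrs V E x'" using X x fin unfolding nbrs_def by auto
    then have "E z x" using s2 xz unfolding nbrs_def by auto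
    then have "E z y" using X(4) Z fin by blast
    moreover have "y \<noteq> x'" using X ne y_def by auto
    moreover have "y \<in> V" using bv[OF d beta x] y_def by simp
    ultimately have "y \<in> insert x' (nbrs V E x')" using s1 unfolding nbrs_def by auto
    then have "E x' y" using \<open>y \<noteq> x'\<close> unfolding nbrs_def by auto
    then show False using X by simp
  qed
  then show ?thesis unfolding NA_vertex_def z_def x'_def using X(1) x'_def by simp
qed

end
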